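(* Let $S$ be a specialisation independent scheduling rule. For every clause $c=(h\leftarrow B)$ there exist p-goals $M_s,M_q$ with $B=M_s|M_q$ (depending only on $c$) such that every priority derivation step $a|K\xrightarrow{c\xi,\eta}R$ belonging to $S$ satisfies $R=(M_s\xi\underline{\pi}|K|M_q\xi\underline{\pi})\eta$ for some shifting $\underline{\pi}$. In other words, $S$ is of stack-queue type; together with the fact that complete stack-queue sets are specialisation independent scheduling rules, specialisation independent scheduling rules are exactly the complete sets of stack-queue type.
   Context: A p-atom is a pair $a[p]$ of an atom $a$ and a rational priority $p$. A p-goal is a finite set of p-atoms with pairwise distinct priorities, regarded as a list ordered by increasing priority. Substitutions act on atoms and leave priorities unchanged. A clause is $h\leftarrow B$ with $h$ an atom and $B$ a p-goal. For p-goals with no common priority, $F+G=F\cup G$; $F|G$ denotes $F+G$ when all priorities of $F$ are smaller than those of $G$. A shifting $\underline{\pi}$ is a strictly increasing bijection $\mathbb{Q}\to\mathbb{Q}$ acting on priorities ($G\underline\pi$). Priority derivation step: for a p-goal $a|F$ ($a$ of least priority), clause $c=(h\leftarrow B)$, renaming $\xi$ with $var(a|F)\cap var(c\xi)=\emptyset$, idempotent relevant mgu $\theta$ of $a$ and $h\xi$, shifting $\underline{\pi}$ with $F$, $B\xi\underline{\pi}$ sharing no priority: $a|F\xrightarrow{c\xi,\theta}(F+B\xi\underline{\pi})\theta$. Lowering: for $c=(h\leftarrow B)$, a step $a\lambda\underline{\sigma}|(K\lambda\underline{\sigma}+X)\xrightarrow{c}(X+K\lambda\underline{\sigma}+B\xi''\underline{\theta}'')\alpha''$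 is a lowering by $X$ of a step $a|K\xrightarrow{c}(K+B\xi'\underline{\theta}')\alpha'$ ($\lambda$ a substitution, $\underline\sigma$ a shifting); it is a congruent lowering by $X$ if some shifting $\underline{\rho}$ has $K\underline{\rho}=K\underline{\sigma}$ and $B\underline{\theta}'\underline{\rho}=B\underline{\theta}''$. Steps are congruent lowerings of each other if each is a congruent lowering of the other. A set $S$ of steps is complete if (i) whenever some step $G\xrightarrow{c}\cdot$ exists, some step $G\xrightarrow{c}\cdot$ lies in $S$, and (ii) $S$ contains every step that is a congruent lowering of each other with a step of $S$; it is specialisation independent if whenever $Ds_1,Ds_2\in S$ and $Ds_2$ is a lowering of $Ds_1$ by $X$, $Ds_2$ is a congruent lowering of $Ds_1$ by $X$. A specialisation independent scheduling rule is a complete specialisation independent set of steps. Stack-queue type: a set $SQ$ of priority derivation steps is of stack-queue type if for every clause $c=(h\leftarrow B)$ there are p-goals $M_s,M_q$ with $B=M_s|M_q$ such that every step $a|K\xrightarrow{c\xi,\mu}R$ in $SQ$ satisfies $R=(M_s\xi\underline{\gamma}|K|M_q\xi\underline{\gamma})\mu$ for some shifting $\underline{\gamma}$. *)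

theory Defs
  imports Complex_Main
begin

datatype ('f,'v) trm = Var 'v | Fn 'f "('f,'v) trm list"

type_synonym ('f,'v) atom = "'f \<times> ('f,'v) trm list"
type_synonym ('f,'v) patom = "('f,'v) atom \<times> rat"
type_synonym ('f,'v) pgoal = "('f,'v) patom set"
type_synonym ('f,'v) subst = "'v \<Rightarrow> ('f,'v) trm"
type_synonym ('f,'v) clause = "('f,'v) atom \<times> ('f,'v) pgoal"

fun tsubst :: "('f,'v) trm \<Rightarrow> ('f,'v) subst \<Rightarrow> ('f,'v) trm" where
  "tsubst (Var x) \<sigma> = \<sigma> x"
| "tsubst (Fn f ts) \<sigma> = Fn f (map (\<lambda>t. tsubst t \<sigma>) ts)"

fun tvars :: "('f,'v) trm \<Rightarrow> 'v set" where
  "tvars (Var x) = {x}"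
| "tvars (Fn f ts) = \<Union> (set (map tvars ts))"

definition asubst :: "('f,'v) atom \<Rightarrow> ('f,'v) subst \<Rightarrow> ('f,'v) atom" where
  "asubst a \<sigma> = (fst a, map (\<lambda>t. tsubst t \<sigma>) (snd a))"

definition avars :: "('f,'v) atom \<Rightarrow> 'v set" where
  "avars a = \<Union> (tvars ` set (snd a))"

definition gsubst :: "('f,'v) pgoal \<Rightarrow> ('f,'v) subst \<Rightarrow> ('f,'v) pgoal" where
  "gsubst G \<sigma> = (\<lambda>(a,p). (asubst a \<sigma>, p)) ` G"

definition gvars :: "('f,'v) pgoal \<Rightarrow> 'v set" where
  "gvars G = \<Union> ((\<lambda>(a,p). avars a) ` G)"

definition subst_comp :: "('f,'v) subst \<Rightarrow> ('f,'v) subst \<Rightarrow> ('f,'v) subst" where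
  "subst_comp \<sigma> \<tau> = (\<lambda>x. tsubst (\<sigma> x) \<tau>)"

definition sdom :: "('f,'v) subst \<Rightarrow> 'v set" where
  "sdom \<theta> = {x. \<theta> x \<noteq> Var x}"

definition svars :: "('f,'v) subst \<Rightarrow> 'v set" where
  "svars \<theta> = sdom \<theta> \<union> \<Union> (tvars ` \<theta> ` sdom \<theta>)"

definition unifier :: "('f,'v) subst \<Rightarrow> ('f,'v) atom \<Rightarrow> ('f,'v) atom \<Rightarrow> bool" where
  "unifier \<theta> a b \<longleftrightarrow> asubst a \<theta> = asubst b \<theta>"

definition mgu :: "('f,'v) subst \<Rightarrow> ('f,'v) atom \<Rightarrow> ('f,'v) atom \<Rightarrow> bool" where
  "mgu \<theta> a b \<longleftrightarrow> unifier \<theta> a b \<and> (\<forall>\<sigma>. unifier \<sigma> a b \<longrightarrow> (\<exists>\<delta>. \<sigma> = subst_comp \<theta> \<delta>))"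

definition idempotent :: "('f,'v) subst \<Rightarrow> bool" where
  "idempotent \<theta> \<longleftrightarrow> subst_comp \<theta> \<theta> = \<theta>"

definition relevant :: "('f,'v) subst \<Rightarrow> ('f,'v) atom \<Rightarrow> ('f,'v) atom \<Rightarrow> bool" where
  "relevant \<theta> a b \<longleftrightarrow> svars \<theta> \<subseteq> avars a \<union> avars b"

definition renaming :: "('v \<Rightarrow> 'v) \<Rightarrow> bool" where
  "renaming \<xi> \<longleftrightarrow> bij \<xi>"

definition ren :: "('v \<Rightarrow> 'v) \<Rightarrow> ('f,'v) subst" where
  "ren \<xi> = (\<lambda>x. Var (\<xi> x))"

definition prios :: "('f,'v) pgoal \<Rightarrow> rat set" where
  "prios G = snd ` G"

definition pgoal :: "('f,'v) pgoal \<Rightarrow> bool" where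
  "pgoal G \<longleftrightarrow> finite G \<and> inj_on snd G"

definition shifting :: "(rat \<Rightarrow> rat) \<Rightarrow> bool" where
  "shifting \<pi> \<longleftrightarrow> strict_mono \<pi> \<and> bij \<pi>"

definition gshift :: "('f,'v) pgoal \<Rightarrow> (rat \<Rightarrow> rat) \<Rightarrow> ('f,'v) pgoal" where
  "gshift G \<pi> = (\<lambda>(a,p). (a, \<pi> p)) ` G"

text \<open>F + G is defined (as the union) when F and G share no priority.\<close>
definition prio_disj :: "('f,'v) pgoal \<Rightarrow> ('f,'v) pgoal \<Rightarrow> bool" where
  "prio_disj F G \<longleftrightarrow> prios F \<inter> prios G = {}"

text \<open>F | G is defined (as the union) when all priorities of F are below those of G.\<close>
definition prio_before :: "('f,'v) pgoal \<Rightarrow> ('f,'v) pgoal \<Rightarrow> bool" where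
  "prio_before F G \<longleftrightarrow> (\<forall>p\<in>prios F. \<forall>q\<in>prios G. p < q)"

text \<open>is_first A F G: G = A | F, i.e. A is the p-atom of least priority of G, F the rest.\<close>
definition is_first :: "('f,'v) patom \<Rightarrow> ('f,'v) pgoal \<Rightarrow> ('f,'v) pgoal \<Rightarrow> bool" where
  "is_first A F G \<longleftrightarrow> G = insert A F \<and> prio_before {A} F"

text \<open>A step  G --(c xi, theta)--> R  is recorded as the tuple (G, c, xi, theta, R).\<close>
type_synonym ('f,'v) step =
  "('f,'v) pgoal \<times> ('f,'v) clause \<times> ('v \<Rightarrow> 'v) \<times> ('f,'v) subst \<times> ('f,'v) pgoal"

definition step_via ::
  "('f,'v) pgoal \<Rightarrow> ('f,'v) clause \<Rightarrow> ('v \<Rightarrow> 'v) \<Rightarrow> ('f,'v) subst \<Rightarrow> (rat \<Rightarrow> rat) \<Rightarrow> ('f,'v) pgoal \<Rightarrow> bool"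
where
  "step_via G c \<xi> \<theta> \<pi> R \<longleftrightarrow>
    (\<exists>A F. pgoal G \<and> is_first A F G \<and> pgoal (snd c) \<and> renaming \<xi> \<and>
      gvars G \<inter> (avars (asubst (fst c) (ren \<xi>)) \<union> gvars (gsubst (snd c) (ren \<xi>))) = {} \<and>
      mgu \<theta> (fst A) (asubst (fst c) (ren \<xi>)) \<and> idempotent \<theta> \<and>
      relevant \<theta> (fst A) (asubst (fst c) (ren \<xi>)) \<and>
      shifting \<pi> \<and> prio_disj F (gshift (gsubst (snd c) (ren \<xi>)) \<pi>) \<and>
      R = gsubst (F \<union> gshift (gsubst (snd c) (ren \<xi>)) \<pi>) \<theta>)"

definition is_step :: "('f,'v) step \<Rightarrow> bool" where
  "is_step D \<longleftrightarrow> (case D of (G, c, \<xi>, \<theta>, R) \<Rightarrow> (\<exists>\<pi>. step_via G c \<xi> \<theta> \<pi> R))"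

text \<open>lowering_wit D1 D2 X lam sig th1 th2 A K: D2 is a lowering by X of D1 = (A|K --c--> ...),
  witnessed by the substitution lam, the shifting sig and the body shiftings th1, th2.\<close>
definition lowering_wit ::
  "('f,'v) step \<Rightarrow> ('f,'v) step \<Rightarrow> ('f,'v) pgoal \<Rightarrow> ('f,'v) subst \<Rightarrow> (rat \<Rightarrow> rat)
    \<Rightarrow> (rat \<Rightarrow> rat) \<Rightarrow> (rat \<Rightarrow> rat) \<Rightarrow> ('f,'v) patom \<Rightarrow> ('f,'v) pgoal \<Rightarrow> bool"
where
  "lowering_wit D1 D2 X lam sig th1 th2 A K \<longleftrightarrow>
    is_step D1 \<and> is_step D2 \<and>
    (case D1 of (G1, c1, \<xi>1, \<alpha>1, R1) \<Rightarrow>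
     case D2 of (G2, c2, \<xi>2, \<alpha>2, R2) \<Rightarrow>
      c2 = c1 \<and>
      is_first A K G1 \<and>
      shifting th1 \<and> prio_disj K (gshift (gsubst (snd c1) (ren \<xi>1)) th1) \<and>
      R1 = gsubst (K \<union> gshift (gsubst (snd c1) (ren \<xi>1)) th1) \<alpha>1 \<and>
      shifting sig \<and>
      prio_disj (gshift (gsubst K lam) sig) X \<and>
      is_first (asubst (fst A) lam, sig (snd A)) (gshift (gsubst K lam) sig \<union> X) G2 \<and>
      shifting th2 \<and>
      prio_disj (X \<union> gshift (gsubst K lam) sig) (gshift (gsubst (snd c1) (ren \<xi>2)) th2) \<and>
      R2 = gsubst (X \<union> gshift (gsubst K lam) sig \<union> gshift (gsubst (snd c1) (ren \<xi>2)) th2) \<alpha>2)"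

definition lowering :: "('f,'v) step \<Rightarrow> ('f,'v) step \<Rightarrow> ('f,'v) pgoal \<Rightarrow> bool" where
  "lowering D1 D2 X \<longleftrightarrow> (\<exists>lam sig th1 th2 A K. lowering_wit D1 D2 X lam sig th1 th2 A K)"

definition congruent_lowering :: "('f,'v) step \<Rightarrow> ('f,'v) step \<Rightarrow> ('f,'v) pgoal \<Rightarrow> bool" where
  "congruent_lowering D1 D2 X \<longleftrightarrow>
    (\<exists>lam sig th1 th2 A K \<rho>. lowering_wit D1 D2 X lam sig th1 th2 A K \<and>
       shifting \<rho> \<and> gshift K \<rho> = gshift K sig \<and>
       gshift (gshift (snd (fst (snd D1))) th1) \<rho> = gshift (snd (fst (snd D1))) th2)"

definition mutual_congruent_lowerings :: "('f,'v) step \<Rightarrow> ('f,'v) step \<Rightarrow> bool" where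
  "mutual_congruent_lowerings D D' \<longleftrightarrow>
    (\<exists>X. congruent_lowering D D' X) \<and> (\<exists>X. congruent_lowering D' D X)"

definition complete :: "('f,'v) step set \<Rightarrow> bool" where
  "complete S \<longleftrightarrow>
    (\<forall>D\<in>S. is_step D) \<and>
    (\<forall>G c. (\<exists>\<xi> \<theta> R. is_step (G, c, \<xi>, \<theta>, R)) \<longrightarrow> (\<exists>\<xi> \<theta> R. (G, c, \<xi>, \<theta>, R) \<in> S)) \<and>
    (\<forall>D D'. D \<in> S \<and> mutual_congruent_lowerings D D' \<longrightarrow> D' \<in> S)"

definition spec_independent :: "('f,'v) step set \<Rightarrow> bool" where
  "spec_independent S \<longleftrightarrow>
    (\<forall>D1 D2 X. D1 \<in> S \<and> D2 \<in> S \<and> lowering D1 D2 X \<longrightarrow> congruent_lowering D1 D2 X)"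

definition spec_indep_scheduling_rule :: "('f,'v) step set \<Rightarrow> bool" where
  "spec_indep_scheduling_rule S \<longleftrightarrow> complete S \<and> spec_independent S"

definition stack_queue_type :: "('f,'v) step set \<Rightarrow> bool" where
  "stack_queue_type S \<longleftrightarrow>
    (\<forall>h B. pgoal B \<longrightarrow>
      (\<exists>Ms Mq. pgoal Ms \<and> pgoal Mq \<and> B = Ms \<union> Mq \<and> prio_before Ms Mq \<and>
        (\<forall>G \<xi> \<mu> R A K. (G, (h, B), \<xi>, \<mu>, R) \<in> S \<and> is_first A K G \<longrightarrow>
          (\<exists>\<gamma>. shifting \<gamma> \<and>
             prio_before (gshift (gsubst Ms (ren \<xi>)) \<gamma>) K \<and>
             prio_before (gshift (gsubst Ms (ren \<xi>)) \<gamma> \<union> K) (gshift (gsubst Mq (ren \<xi>)) \<gamma>) \<and>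
             R = gsubst (gshift (gsubst Ms (ren \<xi>)) \<gamma> \<union> K \<union> gshift (gsubst Mq (ren \<xi>)) \<gamma>) \<mu>))))"

end

theory Submission
  imports Defs "HOL-Library.Nat_Bijection"
begin

lemma tsubst_Var[simp]: "tsubst t Var = t" by (induction t) (auto simp: map_idI)

lemma tsubst_id_on: "(\<forall>x\<in>tvars t. \<sigma> x = Var x) \<Longrightarrow> tsubst t \<sigma> = t"
  by (induction t) (auto simp: map_idI)

lemma asubst_Var[simp]: "asubst a Var = a" by (simp add: asubst_def)
lemma ren_id[simp]: "ren id = Var" by (simp add: ren_def fun_eq_iff)
lemma gsubst_Var[simp]: "gsubst G Var = G" by (auto simp: gsubst_def)
lemma gshift_id[simp]: "gshift G id = G" by (auto simp: gshift_def)
lemma prios_gsubst[simp]: "prios (gsubst G \<sigma>) = prios G"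
  by (force simp: prios_def gsubst_def image_iff)
lemma prios_gshift[simp]: "prios (gshift G \<pi>) = \<pi> ` prios G"
  by (force simp: prios_def gshift_def image_iff)
lemma prios_Un[simp]: "prios (A \<union> B) = prios A \<union> prios B" by (auto simp: prios_def)
lemma prios_insert[simp]: "prios (insert a B) = insert (snd a) (prios B)" by (auto simp: prios_def)
lemma prios_empty[simp]: "prios {} = {}" by (auto simp: prios_def)
lemma gsubst_Un: "gsubst (A \<union> B) \<sigma> = gsubst A \<sigma> \<union> gsubst B \<sigma>" by (auto simp: gsubst_def)
lemma gshift_Un: "gshift (A \<union> B) \<sigma> = gshift A \<sigma> \<union> gshift B \<sigma>" by (auto simp: gshift_def)
lemma gsubst_single[simp]: "gsubst {(a,p)} \<sigma> = {(asubst a \<sigma>, p)}" by (auto simp: gsubst_def)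
lemma gshift_single[simp]: "gshift {(a,p)} \<sigma> = {(a, \<sigma> p)}" by (auto simp: gshift_def)
lemma gsubst_empty[simp]: "gsubst {} \<sigma> = {}" by (auto simp: gsubst_def)
lemma gshift_empty[simp]: "gshift {} \<sigma> = {}" by (auto simp: gshift_def)

lemma mono_count:
  fixes f :: "rat \<Rightarrow> rat"
  assumes "strict_mono f" "p \<in> P"
  shows "{y\<in>f`P. y < f p} = f ` {x\<in>P. x < p}"
  using assms by (auto simp: strict_mono_less)

lemma mono_unique:
  fixes f g :: "rat \<Rightarrow> rat"
  assumes f: "strict_mono f" and g: "strict_mono g" and P: "finite P" and eq: "f`P = g`P" and p: "p \<in> P"
  shows "f p = g p"
proof -
  have cf: "card {y\<in>f`P. y < f p} = card {x\<in>P. x < p}"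
    unfolding mono_count[OF f p]
    by (rule card_image) (use strict_mono_imp_inj_on[OF f] in \<open>auto intro: inj_on_subset\<close>)
  have cg: "card {y\<in>g`P. y < g p} = card {x\<in>P. x < p}"
    unfolding mono_count[OF g p]
    by (rule card_image) (use strict_mono_imp_inj_on[OF g] in \<open>auto intro: inj_on_subset\<close>)
  have fin: "finite (f`P)" using P by simp
  have gp: "g p \<in> f`P" using eq p by auto
  have fp: "f p \<in> f`P" using p by auto
  show ?thesis
  proof (rule ccontr)
    assume "f p \<noteq> g p"
    then consider "f p < g p" | "g p < f p" by linarith
    then show False
    proof cases
      case 1
      have s1: "{y\<in>f`P. y < f p} \<subseteq> {y\<in>f`P. y < g p}" using 1 by auto
      have "f p \<in> {y\<in>f`P. y < g p}" "f p \<notin> {y\<in>f`P. y < f p}" using 1 fp by auto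
      with s1 have "{y\<in>f`P. y < f p} \<subset> {y\<in>f`P. y < g p}" by blast
      then have "card {y\<in>f`P. y < f p} < card {y\<in>f`P. y < g p}"
        by (rule psubset_card_mono[rotated]) (use fin in auto)
      then show False using cf cg eq by simp
    next
      case 2
      have s1: "{y\<in>f`P. y < g p} \<subseteq> {y\<in>f`P. y < f p}" using 2 by auto
      have "g p \<in> {y\<in>f`P. y < f p}" "g p \<notin> {y\<in>f`P. y < g p}" using 2 gp by auto
      with s1 have "{y\<in>f`P. y < g p} \<subset> {y\<in>f`P. y < f p}" by blast
      then have "card {y\<in>f`P. y < g p} < card {y\<in>f`P. y < f p}"
        by (rule psubset_card_mono[rotated]) (use fin in auto)
      then show False using cf cg eq by simp
    qed
  qed
qed

lemma is_first_unique:
  assumes "is_first A K G" "is_first A' K' G"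
  shows "A = A' \<and> K = K'"
proof -
  have AK: "A \<notin> K" using assms(1) by (auto simp: is_first_def prio_before_def prios_def)
  have AK': "A' \<notin> K'" using assms(2) by (auto simp: is_first_def prio_before_def prios_def)
  have "A = A'"
  proof (rule ccontr)
    assume ne: "A \<noteq> A'"
    then have "A' \<in> K" "A \<in> K'" using assms by (auto simp: is_first_def)
    then have "snd A < snd A'" "snd A' < snd A" using assms
      by (auto simp: is_first_def prio_before_def prios_def)
    then show False by simp
  qed
  moreover have "K = G - {A}" "K' = G - {A'}" using assms AK AK' by (auto simp: is_first_def)
  ultimately show ?thesis by simp
qed


definition validp :: "('f,'v) step \<Rightarrow> ('f,'v) patom \<Rightarrow> ('f,'v) pgoal \<Rightarrow> (rat \<Rightarrow> rat) \<Rightarrow> bool" where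
  "validp D A K \<pi> \<longleftrightarrow> (case D of (G,c,\<xi>,\<theta>,R) \<Rightarrow> is_first A K G \<and> shifting \<pi> \<and>
     prio_disj K (gshift (gsubst (snd c) (ren \<xi>)) \<pi>) \<and> R = gsubst (K \<union> gshift (gsubst (snd c) (ren \<xi>)) \<pi>) \<theta>)"

lemma step_via_validp: "step_via G c \<xi> \<theta> \<pi> R \<Longrightarrow> \<exists>A K. validp (G,c,\<xi>,\<theta>,R) A K \<pi>"
  unfolding step_via_def validp_def by auto

lemma is_step_validp: "is_step D \<Longrightarrow> \<exists>A K \<pi>. validp D A K \<pi>"
  unfolding is_step_def by (cases D) (force dest: step_via_validp)

lemma is_step_pgoal: "is_step (G,c,\<xi>,\<theta>,R) \<Longrightarrow> pgoal G \<and> pgoal (snd c)"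
  unfolding is_step_def step_via_def by auto

lemma shifting_mono: "shifting \<pi> \<Longrightarrow> strict_mono \<pi>" by (simp add: shifting_def)

lemma validp_unique:
  assumes v1: "validp (G,c,\<xi>,\<theta>,R) A K \<pi>" and v2: "validp (G,c,\<xi>,\<theta>,R) A' K' \<pi>'"
    and fin: "finite (prios (snd c))"
  shows "A = A' \<and> K = K' \<and> (\<forall>q\<in>prios (snd c). \<pi> q = \<pi>' q)"
proof -
  have AK: "A = A' \<and> K = K'" using v1 v2 is_first_unique[of A K G A' K'] unfolding validp_def by simp
  have e1: "\<pi> ` prios (snd c) = prios R - prios K"
    using v1 unfolding validp_def prio_disj_def by auto
  have e2: "\<pi>' ` prios (snd c) = prios R - prios K"
    using v2 AK unfolding validp_def prio_disj_def by auto
  have "strict_mono \<pi>" "strict_mono \<pi>'" using v1 v2 unfolding validp_def by (auto simp: shifting_def)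
  then have "\<forall>q\<in>prios (snd c). \<pi> q = \<pi>' q" using mono_unique[OF _ _ fin] e1 e2 by metis
  with AK show ?thesis by simp
qed

lemma LWI:
  assumes "is_step (G1,c,\<xi>1,\<alpha>1,R1)" "is_step (G2,c,\<xi>2,\<alpha>2,R2)"
    and "validp (G1,c,\<xi>1,\<alpha>1,R1) A K th1"
    and "shifting sig" "prio_disj (gshift (gsubst K lam) sig) X"
    and "validp (G2,c,\<xi>2,\<alpha>2,R2) (asubst (fst A) lam, sig (snd A)) (gshift (gsubst K lam) sig \<union> X) th2"
  shows "lowering_wit (G1,c,\<xi>1,\<alpha>1,R1) (G2,c,\<xi>2,\<alpha>2,R2) X lam sig th1 th2 A K"
  using assms unfolding lowering_wit_def validp_def prio_disj_def
  by (auto simp: Un_ac)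

lemma lowering_wit_validp:
  assumes "lowering_wit (G1,c1,\<xi>1,\<alpha>1,R1) (G2,c2,\<xi>2,\<alpha>2,R2) X lam sig th1 th2 A K"
  shows "c2 = c1 \<and> validp (G1,c1,\<xi>1,\<alpha>1,R1) A K th1 \<and> shifting sig \<and> prio_disj (gshift (gsubst K lam) sig) X \<and>
    validp (G2,c2,\<xi>2,\<alpha>2,R2) (asubst (fst A) lam, sig (snd A)) (gshift (gsubst K lam) sig \<union> X) th2"
  using assms unfolding lowering_wit_def validp_def prio_disj_def
  by (auto simp: Un_ac)


lemma pgoal_fin_prios: "pgoal G \<Longrightarrow> finite (prios G)" by (simp add: pgoal_def prios_def)

lemma CL:
  assumes SI: "spec_independent S"
    and D1: "(G1,c,\<xi>1,\<alpha>1,R1) \<in> S" and D2: "(G2,c2,\<xi>2,\<alpha>2,R2) \<in> S"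
    and lw: "lowering_wit (G1,c,\<xi>1,\<alpha>1,R1) (G2,c2,\<xi>2,\<alpha>2,R2) X lam sig th1 th2 A K"
    and v1: "validp (G1,c,\<xi>1,\<alpha>1,R1) A1 K1 \<pi>1" and v2: "validp (G2,c2,\<xi>2,\<alpha>2,R2) A2 K2 \<pi>2"
  shows "\<forall>q\<in>prios (snd c). \<forall>k\<in>prios K. (\<pi>1 q < k \<longleftrightarrow> \<pi>2 q < sig k)"
proof -
  have "lowering (G1,c,\<xi>1,\<alpha>1,R1) (G2,c2,\<xi>2,\<alpha>2,R2) X" using lw unfolding lowering_def by blast
  then have "congruent_lowering (G1,c,\<xi>1,\<alpha>1,R1) (G2,c2,\<xi>2,\<alpha>2,R2) X"
    using SI D1 D2 unfolding spec_independent_def by blast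
  then obtain lam' sig' th1' th2' A' K' \<rho> where
    lw': "lowering_wit (G1,c,\<xi>1,\<alpha>1,R1) (G2,c2,\<xi>2,\<alpha>2,R2) X lam' sig' th1' th2' A' K'"
    and r: "shifting \<rho>" and rK: "gshift K' \<rho> = gshift K' sig'"
    and rB: "gshift (gshift (snd c) th1') \<rho> = gshift (snd c) th2'"
    unfolding congruent_lowering_def by auto
  note a = lowering_wit_validp[OF lw] and a' = lowering_wit_validp[OF lw']
  have st: "is_step (G1,c,\<xi>1,\<alpha>1,R1)" using lw unfolding lowering_wit_def by blast
  have finB: "finite (prios (snd c))" using is_step_pgoal[OF st] pgoal_fin_prios by blast
  have finG: "finite G1" using is_step_pgoal[OF st] by (simp add: pgoal_def)
  have c2: "c2 = c" using a by simp
  have u1: "A = A' \<and> K = K' \<and> (\<forall>q\<in>prios (snd c). th1 q = th1' q)"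
    using validp_unique[of G1 c] a a' finB by blast
  have u1': "A = A1 \<and> K = K1 \<and> (\<forall>q\<in>prios (snd c). th1 q = \<pi>1 q)"
    using validp_unique[of G1 c] a v1 finB by blast
  have u2: "gshift (gsubst K lam) sig \<union> X = gshift (gsubst K' lam') sig' \<union> X \<and> (\<forall>q\<in>prios (snd c). th2 q = th2' q)"
    using validp_unique[of G2 c] a a' finB c2 by blast
  have u2': "(\<forall>q\<in>prios (snd c). th2 q = \<pi>2 q)"
    using validp_unique[of G2 c] a v2 finB c2 by blast
  have "K \<subseteq> G1" using a unfolding validp_def is_first_def by auto
  then have finK: "finite (prios K)" using finG by (simp add: prios_def finite_subset)
  have "sig ` prios K = prios (gshift (gsubst K lam) sig \<union> X) - prios X"
    using a unfolding prio_disj_def by auto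
  also have "\<dots> = sig' ` prios K" using u2 a' u1 unfolding prio_disj_def by auto
  finally have ss: "\<forall>k\<in>prios K. sig k = sig' k"
    using mono_unique[OF _ _ finK] a a' shifting_mono by metis
  have "\<rho> ` prios K = sig' ` prios K" using rK u1 by (metis prios_gshift)
  then have rs: "\<forall>k\<in>prios K. \<rho> k = sig' k"
    using mono_unique[OF _ _ finK] a' r shifting_mono by metis
  have "(\<rho> \<circ> th1') ` prios (snd c) = th2' ` prios (snd c)" using rB by (metis prios_gshift image_comp)
  moreover have "strict_mono (\<rho> \<circ> th1')" using r a' shifting_mono validp_def
    by (metis (no_types, lifting) case_prod_conv strict_mono_def comp_apply)
  ultimately have rt: "\<forall>q\<in>prios (snd c). \<rho> (th1' q) = th2' q"
    using mono_unique[OF _ _ finB] a' shifting_mono unfolding validp_def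
    by (metis (no_types, lifting) case_prod_conv comp_apply)
  have mr: "strict_mono \<rho>" using r shifting_mono by blast
  show ?thesis
  proof (intro ballI)
    fix q k assume q: "q \<in> prios (snd c)" and k: "k \<in> prios K"
    have "\<pi>1 q < k \<longleftrightarrow> th1' q < k" using u1 u1' q by simp
    also have "\<dots> \<longleftrightarrow> \<rho> (th1' q) < \<rho> k" using mr by (simp add: strict_mono_less)
    also have "\<dots> \<longleftrightarrow> \<pi>2 q < sig k" using rt rs ss q k u2 u2' by simp
    finally show "\<pi>1 q < k \<longleftrightarrow> \<pi>2 q < sig k" .
  qed
qed


locale ctx =
  fixes S :: "('f,'v) step set" and h :: "('f,'v) atom" and B :: "('f,'v) pgoal" and fr :: "nat \<Rightarrow> 'v"
  assumes SR: "spec_indep_scheduling_rule S" and pB: "pgoal B" and inj_fr: "inj fr"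
    and fresh: "range fr \<inter> (avars h \<union> gvars B) = {}"
begin

definition gvp :: "nat \<times> nat \<Rightarrow> 'v" where "gvp p = fr (prod_encode p)"
definition gv :: "nat \<Rightarrow> nat \<Rightarrow> 'v" where "gv s i = gvp (s,i)"
definition genatom :: "'f \<Rightarrow> nat \<Rightarrow> nat \<Rightarrow> ('f,'v) atom" where
  "genatom g m s = (g, map (\<lambda>i. Var (gv s i)) [0..<m])"
definition inst :: "(nat \<times> nat \<Rightarrow> ('f,'v) trm) \<Rightarrow> ('f,'v) subst" where
  "inst F x = (if x \<in> range gvp then F (inv gvp x) else Var x)"
definition n :: nat where "n = length (snd h)"
definition g0 :: "('f,'v) atom" where "g0 = genatom (fst h) n 0"
definition thh :: "('f,'v) subst" where
  "thh = inst (\<lambda>(s,i). if s = 0 \<and> i < n then snd h ! i else Var (gv s i))"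

lemma inj_gvp: "inj gvp"
  unfolding gvp_def inj_def using inj_fr[unfolded inj_def] prod_encode_eq by metis

lemma gv_inj[simp]: "gv s i = gv s' i' \<longleftrightarrow> s = s' \<and> i = i'"
  using inj_gvp unfolding gv_def inj_def by auto

lemma inst_gv[simp]: "inst F (gv s i) = F (s,i)"
  unfolding inst_def gv_def using inj_gvp by auto

lemma gv_range: "gv s i \<in> range fr" unfolding gv_def gvp_def by auto

lemma inst_out: "x \<notin> range fr \<Longrightarrow> inst F x = Var x"
  unfolding inst_def gvp_def by auto

lemma avars_genatom: "avars (genatom g m s) = {gv s i | i. i < m}"
  unfolding avars_def genatom_def by auto

lemma avars_genatom_fr: "avars (genatom g m s) \<subseteq> range fr"
  using avars_genatom gv_range by auto

lemma asubst_genatom: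
  assumes "\<forall>i<length ts. \<sigma> (gv s i) = ts ! i"
  shows "asubst (genatom g (length ts) s) \<sigma> = (g, ts)"
  using assms unfolding asubst_def genatom_def by (auto intro: nth_equalityI)

lemma h_fixed: "\<forall>x\<in>avars h. \<sigma> x = Var x \<Longrightarrow> \<forall>t\<in>set (snd h). tsubst t \<sigma> = t"
  unfolding avars_def by (auto intro!: tsubst_id_on)

lemma thh_out: "x \<notin> range fr \<Longrightarrow> thh x = Var x" unfolding thh_def by (rule inst_out)

lemma thh_cases: "thh x = Var x \<or> (\<exists>i<n. x = gv 0 i \<and> thh x = snd h ! i)"
proof (cases "x \<in> range gvp")
  case True
  then obtain s i where x: "x = gv s i" unfolding gv_def by auto
  then show ?thesis unfolding thh_def by auto
next
  case False
  then show ?thesis unfolding thh_def inst_def by auto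
qed

lemma thh_h: "\<forall>t\<in>set (snd h). tsubst t thh = t"
  using h_fixed thh_out fresh by blast

lemma asubst_h_thh: "asubst h thh = h"
  using thh_h unfolding asubst_def by (simp add: map_idI)

lemma asubst_g0_thh: "asubst g0 thh = h"
proof -
  have "asubst (genatom (fst h) (length (snd h)) 0) thh = (fst h, snd h)"
    by (rule asubst_genatom) (auto simp: thh_def n_def)
  then show ?thesis by (simp add: g0_def n_def)
qed

lemma mgu_thh: "mgu thh g0 h"
  unfolding mgu_def
proof (intro conjI allI impI)
  show "unifier thh g0 h" unfolding unifier_def using asubst_h_thh asubst_g0_thh by simp
  fix \<sigma> assume u: "unifier \<sigma> g0 h"
  have eq: "map (\<lambda>i. \<sigma> (gv 0 i)) [0..<n] = map (\<lambda>t. tsubst t \<sigma>) (snd h)"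
    using u unfolding unifier_def asubst_def g0_def genatom_def by (simp add: comp_def)
  have "\<sigma> = subst_comp thh \<sigma>"
  proof
    fix x
    from thh_cases[of x] show "\<sigma> x = subst_comp thh \<sigma> x"
    proof
      assume "thh x = Var x" then show ?thesis by (simp add: subst_comp_def)
    next
      assume "\<exists>i<n. x = gv 0 i \<and> thh x = snd h ! i"
      then obtain i where i: "i < n" "x = gv 0 i" "thh x = snd h ! i" by blast
      have "map (\<lambda>i. \<sigma> (gv 0 i)) [0..<n] ! i = map (\<lambda>t. tsubst t \<sigma>) (snd h) ! i" using eq by simp
      then show ?thesis using i by (simp add: subst_comp_def n_def)
    qed
  qed
  then show "\<exists>\<delta>. \<sigma> = subst_comp thh \<delta>" by blast
qed

lemma idem_thh: "idempotent thh"
  unfolding idempotent_def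
proof
  fix x
  from thh_cases[of x] show "subst_comp thh thh x = thh x"
  proof
    assume "thh x = Var x" then show ?thesis by (simp add: subst_comp_def)
  next
    assume "\<exists>i<n. x = gv 0 i \<and> thh x = snd h ! i"
    then obtain i where i: "i < n" "thh x = snd h ! i" by blast
    then have "snd h ! i \<in> set (snd h)" by (simp add: n_def)
    then show ?thesis using i thh_h by (simp add: subst_comp_def)
  qed
qed

lemma relevant_thh: "relevant thh g0 h"
  unfolding relevant_def svars_def sdom_def
proof (intro Un_least subsetI)
  fix x assume "x \<in> {x. thh x \<noteq> Var x}"
  then obtain i where "i < n" "x = gv 0 i" using thh_cases[of x] by auto
  then show "x \<in> avars g0 \<union> avars h" unfolding g0_def avars_genatom by auto
next
  fix y assume "y \<in> \<Union> (tvars ` thh ` {x. thh x \<noteq> Var x})"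
  then obtain x where x: "thh x \<noteq> Var x" "y \<in> tvars (thh x)" by auto
  then obtain i where "i < n" "thh x = snd h ! i" using thh_cases[of x] by auto
  then show "y \<in> avars g0 \<union> avars h" using x unfolding avars_def n_def by auto
qed


lemma shifting_trans: "shifting (\<lambda>x::rat. x + t)"
  unfolding shifting_def
proof
  show "strict_mono (\<lambda>x::rat. x + t)" by (rule strict_monoI) simp
  show "bij (\<lambda>x::rat. x + t)" unfolding bij_def inj_def surj_def
    by (auto intro!: exI[of _ "_ - t"])
qed

lemma gvars_insert: "gvars (insert (a,p) K) = avars a \<union> gvars K"
  by (auto simp: gvars_def)

lemma SE:
  assumes fin: "finite K0" and inj: "inj_on snd (insert (g0,p0) K0)"
    and lt: "\<forall>r\<in>prios K0. p0 < r" and vK: "gvars K0 \<subseteq> range fr"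
  shows "\<exists>\<theta> R. is_step (insert (g0,p0) K0, (h,B), id, \<theta>, R)"
proof -
  have "finite ((\<lambda>(k,q). k - q) ` (prios K0 \<times> prios B))"
    using fin pgoal_fin_prios[OF pB] by (simp add: prios_def)
  then obtain t where t: "t \<notin> (\<lambda>(k,q). k - q) ` (prios K0 \<times> prios B)"
    using ex_new_if_finite[OF infinite_UNIV_char_0] by blast
  define \<pi> where "\<pi> = (\<lambda>x::rat. x + t)"
  have sh: "shifting \<pi>" unfolding \<pi>_def by (rule shifting_trans)
  have pd: "prio_disj K0 (gshift (gsubst B (ren id)) \<pi>)"
    unfolding prio_disj_def using t by (force simp: \<pi>_def)
  have gv0: "gvars (insert (g0,p0) K0) \<subseteq> range fr"
    using vK avars_genatom_fr unfolding gvars_insert g0_def by auto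
  have "step_via (insert (g0,p0) K0) (h,B) id thh \<pi> (gsubst (K0 \<union> gshift (gsubst B (ren id)) \<pi>) thh)"
    unfolding step_via_def
  proof (intro exI conjI)
    show "pgoal (insert (g0, p0) K0)" using fin inj by (simp add: pgoal_def)
    show "is_first (g0,p0) K0 (insert (g0, p0) K0)" using lt by (simp add: is_first_def prio_before_def)
    show "pgoal (snd (h,B))" using pB by simp
    show "renaming id" by (simp add: renaming_def)
    show "gvars (insert (g0, p0) K0) \<inter> (avars (asubst (fst (h, B)) (ren id)) \<union> gvars (gsubst (snd (h, B)) (ren id))) = {}"
      using gv0 fresh by auto
    show "mgu thh (fst (g0, p0)) (asubst (fst (h, B)) (ren id))" using mgu_thh by simp
    show "idempotent thh" by (rule idem_thh)
    show "relevant thh (fst (g0, p0)) (asubst (fst (h, B)) (ren id))" using relevant_thh by simp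
  qed (use sh pd in auto)
  then show ?thesis unfolding is_step_def by blast
qed


lemma CS: "D \<in> S \<Longrightarrow> is_step D" using SR unfolding spec_indep_scheduling_rule_def complete_def by blast
lemma CE: "is_step (G,c,\<xi>,\<theta>,R) \<Longrightarrow> \<exists>\<xi> \<theta> R. (G,c,\<xi>,\<theta>,R) \<in> S"
  using SR unfolding spec_indep_scheduling_rule_def complete_def by blast
lemma SI: "spec_independent S" using SR unfolding spec_indep_scheduling_rule_def by blast

lemma finPB: "finite (prios B)" using pgoal_fin_prios[OF pB] .

lemma is_first_ins: "\<forall>q\<in>prios K. snd A < q \<Longrightarrow> is_first A K (insert A K)"
  by (simp add: is_first_def prio_before_def)

lemma validp_is_first: "validp (G,c,\<xi>,\<theta>,R) A K \<pi> \<Longrightarrow> is_first A K G"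
  unfolding validp_def by simp

lemma validp_ins:
  assumes "validp (insert A K,c,\<xi>,\<theta>,R) A' K' \<pi>" "\<forall>q\<in>prios K. snd A < q"
  shows "validp (insert A K,c,\<xi>,\<theta>,R) A K \<pi>"
proof -
  have "A' = A \<and> K' = K" using is_first_unique[OF validp_is_first[OF assms(1)] is_first_ins[OF assms(2)]] .
  then show ?thesis using assms(1) by simp
qed

lemma SUB:
  assumes D: "(G,(h,B),\<xi>,\<theta>,R) \<in> S" and v: "validp (G,(h,B),\<xi>,\<theta>,R) A K \<pi>" and K1: "K1 \<subseteq> K"
  shows "\<exists>\<xi>1 \<theta>1 R1 \<pi>1. (insert A K1, (h,B), \<xi>1, \<theta>1, R1) \<in> S \<and> validp (insert A K1, (h,B), \<xi>1, \<theta>1, R1) A K1 \<pi>1 \<and>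
    (\<forall>q\<in>prios B. \<forall>k\<in>prios K1. \<pi>1 q < k \<longleftrightarrow> \<pi> q < k)"
proof -
  obtain \<pi>' where sv: "step_via G (h,B) \<xi> \<theta> \<pi>' R" using CS[OF D] unfolding is_step_def by auto
  then obtain A'' F where AF: "pgoal G" "is_first A'' F G" "pgoal B" "renaming \<xi>"
      "gvars G \<inter> (avars (asubst h (ren \<xi>)) \<union> gvars (gsubst B (ren \<xi>))) = {}"
      "mgu \<theta> (fst A'') (asubst h (ren \<xi>))" "idempotent \<theta>" "relevant \<theta> (fst A'') (asubst h (ren \<xi>))"
      "shifting \<pi>'" "prio_disj F (gshift (gsubst B (ren \<xi>)) \<pi>')"
      "R = gsubst (F \<union> gshift (gsubst B (ren \<xi>)) \<pi>') \<theta>"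
    unfolding step_via_def by auto
  have fv: "is_first A K G" using v unfolding validp_def by simp
  have eqAF: "A'' = A \<and> F = K" using is_first_unique[OF AF(2) fv] .
  have v': "validp (G,(h,B),\<xi>,\<theta>,R) A K \<pi>'" using AF eqAF fv unfolding validp_def by simp
  have GAK: "G = insert A K" and lt: "\<forall>q\<in>prios K. snd A < q" using fv unfolding is_first_def prio_before_def by auto
  have lt1: "\<forall>q\<in>prios K1. snd A < q" using lt K1 by (auto simp: prios_def)
  have sub: "insert A K1 \<subseteq> G" using GAK K1 by auto
  have gvsub: "gvars (insert A K1) \<subseteq> gvars G" using sub unfolding gvars_def by auto
  have "step_via (insert A K1) (h,B) \<xi> \<theta> \<pi>' (gsubst (K1 \<union> gshift (gsubst B (ren \<xi>)) \<pi>') \<theta>)"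
    unfolding step_via_def
  proof (intro exI conjI)
    show "pgoal (insert A K1)" using AF(1) sub unfolding pgoal_def by (meson finite_subset inj_on_subset)
    show "is_first A K1 (insert A K1)" by (rule is_first_ins[OF lt1])
    show "prio_disj K1 (gshift (gsubst (snd (h, B)) (ren \<xi>)) \<pi>')"
      using AF(10) eqAF K1 unfolding prio_disj_def by (auto simp: prios_def)
    show "gvars (insert A K1) \<inter> (avars (asubst (fst (h, B)) (ren \<xi>)) \<union> gvars (gsubst (snd (h, B)) (ren \<xi>))) = {}"
      using AF(5) gvsub by auto
  qed (use AF eqAF in auto)
  then have "is_step (insert A K1, (h,B), \<xi>, \<theta>, gsubst (K1 \<union> gshift (gsubst B (ren \<xi>)) \<pi>') \<theta>)"
    unfolding is_step_def by blast
  then obtain \<xi>1 \<theta>1 R1 where D1: "(insert A K1, (h,B), \<xi>1, \<theta>1, R1) \<in> S" using CE by blast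
  then obtain A1 K1' \<pi>1 where "validp (insert A K1, (h,B), \<xi>1, \<theta>1, R1) A1 K1' \<pi>1"
    using is_step_validp CS by blast
  then have v1: "validp (insert A K1, (h,B), \<xi>1, \<theta>1, R1) A K1 \<pi>1" using validp_ins lt1 by blast
  have pdK: "prio_disj K1 (K - K1)"
    using AF(1) GAK K1 unfolding pgoal_def prio_disj_def prios_def inj_on_def by blast
  have v'': "validp (G,(h,B),\<xi>,\<theta>,R) (asubst (fst A) Var, id (snd A)) (gshift (gsubst K1 Var) id \<union> (K - K1)) \<pi>'"
    using v' K1 by (simp add: Un_absorb1)
  have lw: "lowering_wit (insert A K1, (h,B), \<xi>1, \<theta>1, R1) (G,(h,B),\<xi>,\<theta>,R) (K - K1) Var id \<pi>1 \<pi>' A K1"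
    by (rule LWI[OF CS[OF D1] CS[OF D] v1]) (use v'' pdK in \<open>auto simp: shifting_def strict_mono_def\<close>)
  have "\<forall>q\<in>prios B. \<forall>k\<in>prios K1. \<pi>1 q < k \<longleftrightarrow> \<pi> q < id k"
    using CL[OF SI D1 D lw v1 v] by simp
  then show ?thesis using D1 v1 by auto
qed

lemma shifting_aff: "0 < (m::rat) \<Longrightarrow> shifting (\<lambda>x. a + x * m)"
  unfolding shifting_def
proof
  assume m: "0 < m"
  show "strict_mono (\<lambda>x. a + x * m)" by (rule strict_monoI) (simp add: m)
  show "bij (\<lambda>x. a + x * m)" unfolding bij_def inj_def surj_def
  proof (intro conjI allI impI)
    fix x y assume "a + x * m = a + y * m" then show "x = y" using m by simp
  next
    fix y show "\<exists>x. y = a + x * m" using m by (intro exI[of _ "(y - a) / m"]) simp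
  qed
qed


lemma unifier_shape: "unifier \<sigma> a b \<Longrightarrow> fst a = fst b \<and> length (snd a) = length (snd b)"
  unfolding unifier_def asubst_def by (metis fst_conv length_map snd_conv)

lemma asubst_shape[simp]: "fst (asubst a \<sigma>) = fst a" "length (snd (asubst a \<sigma>)) = length (snd a)"
  unfolding asubst_def by auto

lemma gvars_single: "gvars {(a,p)} = avars a" by (simp add: gvars_def)

lemma GEN:
  assumes D1: "(insert A {(kk,k)}, (h,B), \<xi>, \<theta>, R) \<in> S"
    and v1: "validp (insert A {(kk,k)}, (h,B), \<xi>, \<theta>, R) A {(kk,k)} \<pi>1"
    and j: "0 < j" and r: "0 < r"
  shows "\<exists>\<xi>0 \<theta>0 R0 \<pi>0. (insert (g0,0) {(genatom (fst kk) (length (snd kk)) j, r)}, (h,B), \<xi>0, \<theta>0, R0) \<in> S \<and>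
     validp (insert (g0,0) {(genatom (fst kk) (length (snd kk)) j, r)}, (h,B), \<xi>0, \<theta>0, R0) (g0,0) {(genatom (fst kk) (length (snd kk)) j, r)} \<pi>0 \<and>
     (\<forall>q\<in>prios B. \<pi>0 q < r \<longleftrightarrow> \<pi>1 q < k)"
proof -
  define genk where "genk = genatom (fst kk) (length (snd kk)) j"
  define K0 where "K0 = {(genk, r)}"
  obtain \<pi>' where sv: "step_via (insert A {(kk,k)}) (h,B) \<xi> \<theta> \<pi>' R" using CS[OF D1] unfolding is_step_def by auto
  then obtain A'' F where AF: "is_first A'' F (insert A {(kk,k)})" "mgu \<theta> (fst A'') (asubst h (ren \<xi>))"
    unfolding step_via_def by auto
  have fv: "is_first A {(kk,k)} (insert A {(kk,k)})" using v1 unfolding validp_def by simp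
  have "A'' = A" using is_first_unique[OF AF(1) fv] by simp
  then have "unifier \<theta> (fst A) (asubst h (ren \<xi>))" using AF(2) unfolding mgu_def by simp
  then have "fst (fst A) = fst (asubst h (ren \<xi>)) \<and> length (snd (fst A)) = length (snd (asubst h (ren \<xi>)))"
    by (rule unifier_shape)
  then have shA: "fst (fst A) = fst h" "length (snd (fst A)) = n" using n_def by auto
  have Ak: "snd A < k" using fv unfolding is_first_def prio_before_def by simp
  have "\<exists>\<theta> R. is_step (insert (g0,0) K0, (h,B), id, \<theta>, R)"
  proof (rule SE)
    show "inj_on snd (insert (g0, 0) K0)" using r by (simp add: K0_def)
    show "gvars K0 \<subseteq> range fr" unfolding K0_def gvars_single genk_def by (rule avars_genatom_fr)
  qed (use r in \<open>auto simp: K0_def\<close>)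
  then obtain \<xi>0 \<theta>0 R0 where D0: "(insert (g0,0) K0, (h,B), \<xi>0, \<theta>0, R0) \<in> S" using CE by blast
  then obtain A0 K0' \<pi>0 where "validp (insert (g0,0) K0, (h,B), \<xi>0, \<theta>0, R0) A0 K0' \<pi>0"
    using is_step_validp CS by blast
  then have v0: "validp (insert (g0,0) K0, (h,B), \<xi>0, \<theta>0, R0) (g0,0) K0 \<pi>0"
    by (rule validp_ins) (use r in \<open>simp add: K0_def\<close>)
  define lam where "lam = inst (\<lambda>(s,i). if s = 0 then (if i < n then snd (fst A) ! i else Var (gv s i))
      else if s = j then (if i < length (snd kk) then snd kk ! i else Var (gv s i)) else Var (gv s i))"
  have "asubst (genatom (fst h) (length (snd (fst A))) 0) lam = (fst h, snd (fst A))"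
    by (rule asubst_genatom) (auto simp: lam_def shA)
  then have la: "asubst g0 lam = fst A" using shA by (simp add: g0_def prod_eq_iff)
  have "asubst (genatom (fst kk) (length (snd kk)) j) lam = (fst kk, snd kk)"
    by (rule asubst_genatom) (use j in \<open>auto simp: lam_def\<close>)
  then have lk: "asubst genk lam = kk" by (simp add: genk_def)
  define sig where "sig = (\<lambda>x. snd A + x * ((k - snd A) / r))"
  have ssig: "shifting sig" unfolding sig_def by (rule shifting_aff) (use Ak r in simp)
  have sig0: "sig 0 = snd A" and sigr: "sig r = k" using r by (auto simp: sig_def)
  have v1': "validp (insert A {(kk,k)}, (h,B), \<xi>, \<theta>, R) (asubst (fst (g0,0)) lam, sig (snd (g0,0))) (gshift (gsubst K0 lam) sig \<union> {}) \<pi>1"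
    using v1 la lk sig0 sigr by (simp add: K0_def)
  have lw: "lowering_wit (insert (g0,0) K0, (h,B), \<xi>0, \<theta>0, R0) (insert A {(kk,k)}, (h,B), \<xi>, \<theta>, R) {} lam sig \<pi>0 \<pi>1 (g0,0) K0"
    by (rule LWI[OF CS[OF D0] CS[OF D1] v0 ssig _ v1']) (simp add: prio_disj_def)
  have "\<forall>q\<in>prios B. \<pi>0 q < r \<longleftrightarrow> \<pi>1 q < sig r"
    using CL[OF SI D0 D1 lw v0 v1] by (simp add: K0_def)
  then show ?thesis using D0 v0 sigr unfolding K0_def genk_def by auto
qed


lemma shifting_id: "shifting id" by (simp add: shifting_def strict_mono_def)

lemma DC_exists:
  "\<exists>\<xi> \<theta> R \<pi>. (insert (g0,0) {(genatom g m 1, 1), (genatom g' m' 2, 2)}, (h,B), \<xi>, \<theta>, R) \<in> S \<and>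
     validp (insert (g0,0) {(genatom g m 1, 1), (genatom g' m' 2, 2)}, (h,B), \<xi>, \<theta>, R) (g0,0) {(genatom g m 1, 1), (genatom g' m' 2, 2)} \<pi>"
proof -
  let ?K = "{(genatom g m 1, 1::rat), (genatom g' m' 2, 2)}"
  have "\<exists>\<theta> R. is_step (insert (g0,0) ?K, (h,B), id, \<theta>, R)"
  proof (rule SE)
    show "gvars ?K \<subseteq> range fr" using avars_genatom_fr by (simp add: gvars_insert gvars_def)
  qed auto
  then obtain \<xi> \<theta> R where D: "(insert (g0,0) ?K, (h,B), \<xi>, \<theta>, R) \<in> S" using CE by blast
  then obtain A K \<pi> where "validp (insert (g0,0) ?K, (h,B), \<xi>, \<theta>, R) A K \<pi>"
    using is_step_validp CS by blast
  then have "validp (insert (g0,0) ?K, (h,B), \<xi>, \<theta>, R) (g0,0) ?K \<pi>"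
    by (rule validp_ins) simp
  then show ?thesis using D by blast
qed

lemma GGCG1:
  assumes D0: "(insert (g0,0) {(genatom g m 1, 1)}, (h,B), \<xi>0, \<theta>0, R0) \<in> S"
    and v0: "validp (insert (g0,0) {(genatom g m 1, 1)}, (h,B), \<xi>0, \<theta>0, R0) (g0,0) {(genatom g m 1, 1)} \<pi>0"
    and DC: "(insert (g0,0) {(genatom g m 1, 1), (genatom g' m' 2, 2)}, (h,B), \<xi>, \<theta>, R) \<in> S"
    and vC: "validp (insert (g0,0) {(genatom g m 1, 1), (genatom g' m' 2, 2)}, (h,B), \<xi>, \<theta>, R) (g0,0) {(genatom g m 1, 1), (genatom g' m' 2, 2)} \<pi>C"
  shows "\<forall>q\<in>prios B. \<pi>0 q < 1 \<longleftrightarrow> \<pi>C q < 1"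
proof -
  have vC': "validp (insert (g0,0) {(genatom g m 1, 1), (genatom g' m' 2, 2)}, (h,B), \<xi>, \<theta>, R)
     (asubst (fst (g0,0::rat)) Var, id (snd (g0,0::rat))) (gshift (gsubst {(genatom g m 1, 1)} Var) id \<union> {(genatom g' m' 2, 2)}) \<pi>C"
  proof -
    have e: "gshift (gsubst {(genatom g m 1, 1::rat)} Var) id \<union> {(genatom g' m' 2, 2)} = {(genatom g m 1, 1::rat), (genatom g' m' 2, 2)}" by auto
    show ?thesis unfolding e fst_conv snd_conv asubst_Var id_apply using vC .
  qed
  have lw: "lowering_wit (insert (g0,0) {(genatom g m 1, 1)}, (h,B), \<xi>0, \<theta>0, R0) (insert (g0,0) {(genatom g m 1, 1), (genatom g' m' 2, 2)}, (h,B), \<xi>, \<theta>, R)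
     {(genatom g' m' 2, 2)} Var id \<pi>0 \<pi>C (g0,0) {(genatom g m 1, 1)}"
    by (rule LWI[OF CS[OF D0] CS[OF DC] v0 shifting_id _ vC']) (simp add: prio_disj_def)
  show ?thesis using CL[OF SI D0 DC lw v0 vC] by simp
qed

lemma GGCG2:
  assumes D0: "(insert (g0,0) {(genatom g' m' 2, 2)}, (h,B), \<xi>0, \<theta>0, R0) \<in> S"
    and v0: "validp (insert (g0,0) {(genatom g' m' 2, 2)}, (h,B), \<xi>0, \<theta>0, R0) (g0,0) {(genatom g' m' 2, 2)} \<pi>0"
    and DC: "(insert (g0,0) {(genatom g m 1, 1), (genatom g' m' 2, 2)}, (h,B), \<xi>, \<theta>, R) \<in> S"
    and vC: "validp (insert (g0,0) {(genatom g m 1, 1), (genatom g' m' 2, 2)}, (h,B), \<xi>, \<theta>, R) (g0,0) {(genatom g m 1, 1), (genatom g' m' 2, 2)} \<pi>C"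
  shows "\<forall>q\<in>prios B. \<pi>0 q < 2 \<longleftrightarrow> \<pi>C q < 2"
proof -
  have e: "gshift (gsubst {(genatom g' m' 2, 2::rat)} Var) id \<union> {(genatom g m 1, 1)} = {(genatom g m 1, 1::rat), (genatom g' m' 2, 2)}" by auto
  have vC': "validp (insert (g0,0) {(genatom g m 1, 1), (genatom g' m' 2, 2)}, (h,B), \<xi>, \<theta>, R)
     (asubst (fst (g0,0::rat)) Var, id (snd (g0,0::rat))) (gshift (gsubst {(genatom g' m' 2, 2)} Var) id \<union> {(genatom g m 1, 1)}) \<pi>C"
    unfolding e fst_conv snd_conv asubst_Var id_apply using vC .
  have lw: "lowering_wit (insert (g0,0) {(genatom g' m' 2, 2)}, (h,B), \<xi>0, \<theta>0, R0) (insert (g0,0) {(genatom g m 1, 1), (genatom g' m' 2, 2)}, (h,B), \<xi>, \<theta>, R)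
     {(genatom g m 1, 1)} Var id \<pi>0 \<pi>C (g0,0) {(genatom g' m' 2, 2)}"
    by (rule LWI[OF CS[OF D0] CS[OF DC] v0 shifting_id _ vC']) (simp add: prio_disj_def)
  show ?thesis using CL[OF SI D0 DC lw v0 vC] by simp
qed

lemma Cmp:
  assumes D: "(G,(h,B),\<xi>,\<theta>,R) \<in> S" and v: "validp (G,(h,B),\<xi>,\<theta>,R) A K \<pi>" and k: "k \<in> prios K"
    and D': "(G',(h,B),\<xi>',\<theta>',R') \<in> S" and v': "validp (G',(h,B),\<xi>',\<theta>',R') A' K' \<pi>'" and k': "k' \<in> prios K'"
    and q: "q \<in> prios B" and lt: "\<pi> q < k"
  shows "\<pi>' q < k'"
proof -
  obtain kk where kk: "(kk,k) \<in> K" using k by (auto simp: prios_def)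
  obtain kk' where kk': "(kk',k') \<in> K'" using k' by (auto simp: prios_def)
  obtain \<xi>1 \<theta>1 R1 \<pi>1 where D1: "(insert A {(kk,k)}, (h,B), \<xi>1, \<theta>1, R1) \<in> S"
      and v1: "validp (insert A {(kk,k)}, (h,B), \<xi>1, \<theta>1, R1) A {(kk,k)} \<pi>1"
      and e1: "\<forall>q\<in>prios B. \<pi>1 q < k \<longleftrightarrow> \<pi> q < k"
    using SUB[OF D v, of "{(kk,k)}"] kk by auto
  obtain \<xi>1' \<theta>1' R1' \<pi>1' where D1': "(insert A' {(kk',k')}, (h,B), \<xi>1', \<theta>1', R1') \<in> S"
      and v1': "validp (insert A' {(kk',k')}, (h,B), \<xi>1', \<theta>1', R1') A' {(kk',k')} \<pi>1'"
      and e1': "\<forall>q\<in>prios B. \<pi>1' q < k' \<longleftrightarrow> \<pi>' q < k'"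
    using SUB[OF D' v', of "{(kk',k')}"] kk' by auto
  obtain \<xi>0 \<theta>0 R0 \<pi>0 where D0: "(insert (g0,0) {(genatom (fst kk) (length (snd kk)) 1, 1)}, (h,B), \<xi>0, \<theta>0, R0) \<in> S"
      and v0: "validp (insert (g0,0) {(genatom (fst kk) (length (snd kk)) 1, 1)}, (h,B), \<xi>0, \<theta>0, R0) (g0,0) {(genatom (fst kk) (length (snd kk)) 1, 1)} \<pi>0"
      and e0: "\<forall>q\<in>prios B. \<pi>0 q < 1 \<longleftrightarrow> \<pi>1 q < k"
    using GEN[OF D1 v1, of 1 1] by auto
  obtain \<xi>0' \<theta>0' R0' \<pi>0' where D0': "(insert (g0,0) {(genatom (fst kk') (length (snd kk')) 2, 2)}, (h,B), \<xi>0', \<theta>0', R0') \<in> S"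
      and v0': "validp (insert (g0,0) {(genatom (fst kk') (length (snd kk')) 2, 2)}, (h,B), \<xi>0', \<theta>0', R0') (g0,0) {(genatom (fst kk') (length (snd kk')) 2, 2)} \<pi>0'"
      and e0': "\<forall>q\<in>prios B. \<pi>0' q < 2 \<longleftrightarrow> \<pi>1' q < k'"
    using GEN[OF D1' v1', of 2 2] by auto
  obtain \<xi>C \<theta>C RC \<pi>C where DC: "(insert (g0,0) {(genatom (fst kk) (length (snd kk)) 1, 1), (genatom (fst kk') (length (snd kk')) 2, 2)}, (h,B), \<xi>C, \<theta>C, RC) \<in> S"
     and vC: "validp (insert (g0,0) {(genatom (fst kk) (length (snd kk)) 1, 1), (genatom (fst kk') (length (snd kk')) 2, 2)}, (h,B), \<xi>C, \<theta>C, RC) (g0,0) {(genatom (fst kk) (length (snd kk)) 1, 1), (genatom (fst kk') (length (snd kk')) 2, 2)} \<pi>C"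
    using DC_exists by blast
  have c1: "\<forall>q\<in>prios B. \<pi>0 q < 1 \<longleftrightarrow> \<pi>C q < 1" by (rule GGCG1[OF D0 v0 DC vC])
  have c2: "\<forall>q\<in>prios B. \<pi>0' q < 2 \<longleftrightarrow> \<pi>C q < 2" by (rule GGCG2[OF D0' v0' DC vC])
  have "\<pi>C q < 1" using lt e1 e0 c1 q by auto
  then have "\<pi>C q < 2" by simp
  then show ?thesis using e1' e0' c2 q by auto
qed


lemma MC:
  "\<exists>T. T \<subseteq> prios B \<and> (\<forall>q\<in>T. \<forall>q'\<in>prios B. q' < q \<longrightarrow> q' \<in> T) \<and>
     (\<forall>G \<xi> \<theta> R A K \<pi>. (G,(h,B),\<xi>,\<theta>,R) \<in> S \<longrightarrow> validp (G,(h,B),\<xi>,\<theta>,R) A K \<pi> \<longrightarrow>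
        (\<forall>q\<in>prios B. \<forall>k\<in>prios K. \<pi> q < k \<longleftrightarrow> q \<in> T))"
proof (cases "\<exists>G \<xi> \<theta> R A K \<pi> k. (G,(h,B),\<xi>,\<theta>,R) \<in> S \<and> validp (G,(h,B),\<xi>,\<theta>,R) A K \<pi> \<and> k \<in> prios K")
  case True
  then obtain G \<xi> \<theta> R A K \<pi> k where D: "(G,(h,B),\<xi>,\<theta>,R) \<in> S" and v: "validp (G,(h,B),\<xi>,\<theta>,R) A K \<pi>"
    and k: "k \<in> prios K" by blast
  have mono: "strict_mono \<pi>" using v unfolding validp_def by (simp add: shifting_def)
  show ?thesis
  proof (intro exI[of _ "{q\<in>prios B. \<pi> q < k}"] conjI allI impI ballI)
    fix q q' assume "q \<in> {q\<in>prios B. \<pi> q < k}" "q' \<in> prios B" "q' < q"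
    then have "\<pi> q' < \<pi> q" "q' \<in> prios B" "\<pi> q < k" using mono by (auto simp: strict_mono_less)
    then show "q' \<in> {q\<in>prios B. \<pi> q < k}" by auto
  next
    fix G' \<xi>' \<theta>' R' A' K' \<pi>' q k'
    assume D': "(G',(h,B),\<xi>',\<theta>',R') \<in> S" and v': "validp (G',(h,B),\<xi>',\<theta>',R') A' K' \<pi>'"
      and q: "q \<in> prios B" and k': "k' \<in> prios K'"
    show "\<pi>' q < k' \<longleftrightarrow> q \<in> {q\<in>prios B. \<pi> q < k}"
      using Cmp[OF D v k D' v' k' q] Cmp[OF D' v' k' D v k q] q by auto
  qed auto
next
  case False
  then show ?thesis by (intro exI[of _ "prios B"]) blast
qed

end

lemma finite_tvars: "finite (tvars t)" by (induction t) auto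

lemma finite_avars: "finite (avars a)" unfolding avars_def by (auto simp: finite_tvars)

lemma finite_gvars: "finite G \<Longrightarrow> finite (gvars G)" unfolding gvars_def by (auto simp: finite_avars)

theorem theoremt4p1p1:
  fixes S :: "('f,'v) step set"
  assumes "infinite (UNIV :: 'v set)"
    and "spec_indep_scheduling_rule S"
  shows "stack_queue_type S"
  unfolding stack_queue_type_def
proof (intro allI impI)
  fix h :: "('f,'v) atom" and B :: "('f,'v) pgoal"
  assume pB: "pgoal B"
  have "finite (avars h \<union> gvars B)" using pB finite_avars[of h] finite_gvars[of B] by (simp add: pgoal_def)
  then have "infinite (UNIV - (avars h \<union> gvars B))" using assms(1) by (rule Diff_infinite_finite)
  then obtain fr :: "nat \<Rightarrow> 'v" where fr: "inj fr" "range fr \<subseteq> UNIV - (avars h \<union> gvars B)"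
    using infinite_countable_subset by blast
  interpret ctx S h B fr
    using assms(2) pB fr by unfold_locales auto
  obtain T where T: "T \<subseteq> prios B" and dc: "\<forall>q\<in>T. \<forall>q'\<in>prios B. q' < q \<longrightarrow> q' \<in> T"
    and TT: "\<And>G \<xi> \<theta> R A K \<pi>. (G,(h,B),\<xi>,\<theta>,R) \<in> S \<Longrightarrow> validp (G,(h,B),\<xi>,\<theta>,R) A K \<pi> \<Longrightarrow>
        (\<forall>q\<in>prios B. \<forall>k\<in>prios K. \<pi> q < k \<longleftrightarrow> q \<in> T)"
    using MC by blast
  define Ms where "Ms = {b\<in>B. snd b \<in> T}"
  define Mq where "Mq = {b\<in>B. snd b \<notin> T}"
  have BMs: "B = Ms \<union> Mq" unfolding Ms_def Mq_def by auto
  have pMs: "pgoal Ms" using pB unfolding pgoal_def Ms_def by (auto intro: inj_on_subset)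
  have pMq: "pgoal Mq" using pB unfolding pgoal_def Mq_def by (auto intro: inj_on_subset)
  have prMs: "prios Ms \<subseteq> T \<inter> prios B" and prMq: "prios Mq \<subseteq> prios B - T"
    unfolding Ms_def Mq_def prios_def by auto
  have sep: "\<And>q q'. q \<in> prios Ms \<Longrightarrow> q' \<in> prios Mq \<Longrightarrow> q < q'"
  proof -
    fix q q' assume "q \<in> prios Ms" "q' \<in> prios Mq"
    then have "q \<in> T" "q' \<in> prios B" "q' \<notin> T" using prMs prMq by auto
    then show "q < q'" using dc by (metis linorder_neqE)
  qed
  have pbf: "prio_before Ms Mq" unfolding prio_before_def using sep by blast
  have main: "\<forall>G \<xi> \<mu> R A K. (G, (h, B), \<xi>, \<mu>, R) \<in> S \<and> is_first A K G \<longrightarrow>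
          (\<exists>\<gamma>. shifting \<gamma> \<and>
             prio_before (gshift (gsubst Ms (ren \<xi>)) \<gamma>) K \<and>
             prio_before (gshift (gsubst Ms (ren \<xi>)) \<gamma> \<union> K) (gshift (gsubst Mq (ren \<xi>)) \<gamma>) \<and>
             R = gsubst (gshift (gsubst Ms (ren \<xi>)) \<gamma> \<union> K \<union> gshift (gsubst Mq (ren \<xi>)) \<gamma>) \<mu>)"
  proof (intro allI impI)
    fix G \<xi> \<mu> R A K
    assume a: "(G, (h, B), \<xi>, \<mu>, R) \<in> S \<and> is_first A K G"
    then have D: "(G, (h, B), \<xi>, \<mu>, R) \<in> S" and fA: "is_first A K G" by auto
    obtain A' K' \<pi> where v': "validp (G, (h, B), \<xi>, \<mu>, R) A' K' \<pi>" using is_step_validp CS[OF D] by blast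
    have "A' = A \<and> K' = K" using is_first_unique[OF validp_is_first[OF v'] fA] .
    with v' have v: "validp (G, (h, B), \<xi>, \<mu>, R) A K \<pi>" by simp
    then have sh: "shifting \<pi>" and pd: "prio_disj K (gshift (gsubst B (ren \<xi>)) \<pi>)"
      and R: "R = gsubst (K \<union> gshift (gsubst B (ren \<xi>)) \<pi>) \<mu>"
      unfolding validp_def by auto
    have mono: "strict_mono \<pi>" using sh by (simp add: shifting_def)
    have TK: "\<forall>q\<in>prios B. \<forall>k\<in>prios K. \<pi> q < k \<longleftrightarrow> q \<in> T" using TT[OF D v] .
    show "\<exists>\<gamma>. shifting \<gamma> \<and>
             prio_before (gshift (gsubst Ms (ren \<xi>)) \<gamma>) K \<and>
             prio_before (gshift (gsubst Ms (ren \<xi>)) \<gamma> \<union> K) (gshift (gsubst Mq (ren \<xi>)) \<gamma>) \<and>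
             R = gsubst (gshift (gsubst Ms (ren \<xi>)) \<gamma> \<union> K \<union> gshift (gsubst Mq (ren \<xi>)) \<gamma>) \<mu>"
    proof (intro exI[of _ \<pi>] conjI)
    show "shifting \<pi>" by (rule sh)
    show "prio_before (gshift (gsubst Ms (ren \<xi>)) \<pi>) K"
      unfolding prio_before_def using TK prMs by auto
    show "prio_before (gshift (gsubst Ms (ren \<xi>)) \<pi> \<union> K) (gshift (gsubst Mq (ren \<xi>)) \<pi>)"
      unfolding prio_before_def
    proof (intro ballI)
      fix p p' assume p: "p \<in> prios (gshift (gsubst Ms (ren \<xi>)) \<pi> \<union> K)"
        and p': "p' \<in> prios (gshift (gsubst Mq (ren \<xi>)) \<pi>)"
      from p' obtain q' where q': "q' \<in> prios Mq" "p' = \<pi> q'" by auto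
      from p consider (a) q where "q \<in> prios Ms" "p = \<pi> q" | (b) "p \<in> prios K" by auto
      then show "p < p'"
      proof cases
        case a then show ?thesis using sep q' mono by (auto simp: strict_mono_less)
      next
        case b
        have "q' \<in> prios B" "q' \<notin> T" using q' prMq by auto
        then have "\<not> \<pi> q' < p" using TK b by blast
        moreover have "\<pi> q' \<noteq> p" using pd b \<open>q' \<in> prios B\<close> unfolding prio_disj_def by auto
        ultimately show ?thesis using q' by auto
      qed
    qed
    show "R = gsubst (gshift (gsubst Ms (ren \<xi>)) \<pi> \<union> K \<union> gshift (gsubst Mq (ren \<xi>)) \<pi>) \<mu>"
      unfolding R BMs gsubst_Un gshift_Un by (simp add: Un_ac)
    qed
  qed
  show "\<exists>Ms Mq. pgoal Ms \<and> pgoal Mq \<and> B = Ms \<union> Mq \<and> prio_before Ms Mq \<and>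
        (\<forall>G \<xi> \<mu> R A K. (G, (h, B), \<xi>, \<mu>, R) \<in> S \<and> is_first A K G \<longrightarrow>
          (\<exists>\<gamma>. shifting \<gamma> \<and>
             prio_before (gshift (gsubst Ms (ren \<xi>)) \<gamma>) K \<and>
             prio_before (gshift (gsubst Ms (ren \<xi>)) \<gamma> \<union> K) (gshift (gsubst Mq (ren \<xi>)) \<gamma>) \<and>
             R = gsubst (gshift (gsubst Ms (ren \<xi>)) \<gamma> \<union> K \<union> gshift (gsubst Mq (ren \<xi>)) \<gamma>) \<mu>))"
    using pMs pMq BMs pbf main by blast
qed

end
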